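(* Consider a normal extremal (with $M=1$) starting at the identity, with covector data $\varphi_i=\psi_i(0)$, $i=1,\dots,4$. Then for all $t\in\mathbb R$: (i) $\psi_4\equiv\varphi_4$, $\psi_3=\varphi_3+\tfrac12\varphi_4x$, $\psi_2=\varphi_2+\tfrac12\varphi_3x+\tfrac16\varphi_4x^2$, $\psi_1=\varphi_1-\tfrac12\varphi_3y-\tfrac16\varphi_4(xy+3z)$, and hence $h_1=\varphi_1-(\varphi_3+\tfrac12\varphi_4x)y-\varphi_4z$, $h_2=\varphi_2+(\varphi_3+\tfrac12\varphi_4x)x$; (ii) a.e. $\dot h_1=-(\varphi_3+\varphi_4x)u_2$, $\dot h_2=(\varphi_3+\varphi_4x)u_1$, and the quantity $\tfrac12(\varphi_3+\varphi_4x(t))^2-\varphi_4h_2(t)$ is constant, equal to $\tfrac12\varphi_3^2-\varphi_2\varphi_4$; (iii) $\varphi_1x(t)+\varphi_2y(t)+\bigl(2\varphi_3+\tfrac12\varphi_4x(t)\bigr)z(t)+3\varphi_4v(t)=t$; (iv) with $\theta(t)$ the angle function, $\theta$ is continuously differentiable and $\varphi_3+\varphi_4x(t)=r^2(\theta(t))\dot\theta(t)$, so $\dot\theta^2=\dfrac{\varphi_3^2+2\varphi_4(r(\theta)\sin\theta-\varphi_2)}{r^4(\theta)}$.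
   Context: Let $\mathfrak g$ be the Engel algebra with basis $X,Y,Z,V$, $[X,Y]=Z$, $[X,Z]=V$, all other brackets of basis elements zero; $G$ the corresponding connected simply connected Lie group, with coordinates of the first kind $(x,y,z,v)$ ($\exp(xX+yY+zZ+vV)\leftrightarrow(x,y,z,v)$, identity $=0$). Let $F$ be an arbitrary norm on $\mathbb R^2$, $U=\{u\in\mathbb R^2:F(u)\le1\}$, where $(u_1,u_2)$ is identified with $u_1X(e)+u_2Y(e)$. The left-invariant time-optimal control system is $\dot x=u_1,\ \dot y=u_2,\ \dot z=\tfrac12(xu_2-yu_1),\ \dot v=-\tfrac12(z+\tfrac16xy)u_1+\tfrac1{12}x^2u_2$, with measurable control $u(t)\in U$ and $x(0)=y(0)=z(0)=v(0)=0$. An extremal is a trajectory $(x,y,z,v)(t)$, $t\in\mathbb R$, with control $u(t)$, for which there is a nowhere vanishing absolutely continuous $\psi(t)=(\psi_1,\psi_2,\psi_3,\psi_4)(t)$ satisfying a.e. $\dot\psi_1=\tfrac1{12}\psi_4yu_1-(\tfrac12\psi_3+\tfrac16\psi_4x)u_2$, $\dot\psi_2=(\tfrac12\psi_3+\tfrac1{12}\psi_4x)u_1$, $\dot\psi_3=\tfrac12\psi_4u_1$, $\dot\psi_4=0$, and the maximum condition $h_1(t)u_1(t)+h_2(t)u_2(t)=\max_{u\in U}(h_1(t)u_1+h_2(t)u_2)=M$ for a.e. $t$, where $h_1=\psi_1-\tfrac12\psi_3y-\tfrac1{12}\psi_4xy-\tfrac12\psi_4z$, $h_2=\psi_2+\tfrac12\psi_3x+\tfrac1{12}\psi_4x^2$,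 and $M\ge0$ is a constant. It is abnormal if $M=0$ and normal if $M>0$; in the normal case $\psi$ is rescaled so that $M=1$. Write $\varphi_i=\psi_i(0)$. Let $F_U(h)=\max_{u\in U}h\cdot u$ and $U^*=\{h:F_U(h)\le1\}$ (polar figure). Let $r(\theta)>0$ be the polar equation of $\partial U^*$, i.e. $F_U(r(\theta)\cos\theta,r(\theta)\sin\theta)=1$. For $M=1$, $(h_1(t),h_2(t))\in\partial U^*$, and $\theta(t)$ denotes a continuous function with $(h_1(t),h_2(t))=r(\theta(t))(\cos\theta(t),\sin\theta(t))$. *)

theory Defs
  imports "HOL-Analysis.Analysis"
begin

definition is_norm2 :: "(real \<times> real \<Rightarrow> real) \<Rightarrow> bool" where
  "is_norm2 F \<longleftrightarrow>
     (\<forall>a b. F (a, b) \<ge> 0) \<and>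
     (\<forall>a b. F (a, b) = 0 \<longleftrightarrow> a = 0 \<and> b = 0) \<and>
     (\<forall>c a b. F (c * a, c * b) = \<bar>c\<bar> * F (a, b)) \<and>
     (\<forall>a b c d. F (a + c, b + d) \<le> F (a, b) + F (c, d))"

definition ballU :: "(real \<times> real \<Rightarrow> real) \<Rightarrow> (real \<times> real) set" where
  "ballU F = {u. F u \<le> 1}"

definition F_U :: "(real \<times> real \<Rightarrow> real) \<Rightarrow> real \<times> real \<Rightarrow> real" where
  "F_U F h = Sup {fst h * fst u + snd h * snd u | u. u \<in> ballU F}"

definition polarU :: "(real \<times> real \<Rightarrow> real) \<Rightarrow> (real \<times> real) set" where
  "polarU F = {h. F_U F h \<le> 1}"

definition polar_r :: "(real \<times> real \<Rightarrow> real) \<Rightarrow> real \<Rightarrow> real" where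
  "polar_r F \<theta> = (THE \<rho>. \<rho> > 0 \<and> F_U F (\<rho> * cos \<theta>, \<rho> * sin \<theta>) = 1)"

definition ham1 :: "real \<Rightarrow> real \<Rightarrow> real \<Rightarrow> real \<Rightarrow> real \<Rightarrow> real \<Rightarrow> real" where
  "ham1 p1 p3 p4 x y z = p1 - p3 * y / 2 - p4 * x * y / 12 - p4 * z / 2"

definition ham2 :: "real \<Rightarrow> real \<Rightarrow> real \<Rightarrow> real \<Rightarrow> real" where
  "ham2 p2 p3 p4 x = p2 + p3 * x / 2 + p4 * x^2 / 12"

(* Absolutely continuous functions satisfying an ODE a.e. are
   expressed equivalently by the integral equations (Lebesgue interval integrals from 0 to t,
   oriented, so t < 0 is allowed). *)
definition normal_extremal ::
  "(real \<times> real \<Rightarrow> real) \<Rightarrow> (real \<Rightarrow> real) \<Rightarrow> (real \<Rightarrow> real) \<Rightarrow> (real \<Rightarrow> real) \<Rightarrow> (real \<Rightarrow> real)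
   \<Rightarrow> (real \<Rightarrow> real) \<Rightarrow> (real \<Rightarrow> real)
   \<Rightarrow> (real \<Rightarrow> real) \<Rightarrow> (real \<Rightarrow> real) \<Rightarrow> (real \<Rightarrow> real) \<Rightarrow> (real \<Rightarrow> real) \<Rightarrow> bool" where
  "normal_extremal F x y z v u1 u2 \<psi>1 \<psi>2 \<psi>3 \<psi>4 \<longleftrightarrow>
     u1 \<in> borel_measurable lborel \<and> u2 \<in> borel_measurable lborel \<and>
     (\<forall>t. (u1 t, u2 t) \<in> ballU F) \<and>
     (\<forall>t. x t = (LBINT s=0..ereal t. u1 s)) \<and>
     (\<forall>t. y t = (LBINT s=0..ereal t. u2 s)) \<and>
     (\<forall>t. z t = (LBINT s=0..ereal t. (x s * u2 s - y s * u1 s) / 2)) \<and>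
     (\<forall>t. v t = (LBINT s=0..ereal t. - (z s + x s * y s / 6) * u1 s / 2 + x s ^ 2 * u2 s / 12)) \<and>
     (\<forall>t. \<psi>1 t = \<psi>1 0 + (LBINT s=0..ereal t.
            \<psi>4 s * y s * u1 s / 12 - (\<psi>3 s / 2 + \<psi>4 s * x s / 6) * u2 s)) \<and>
     (\<forall>t. \<psi>2 t = \<psi>2 0 + (LBINT s=0..ereal t. (\<psi>3 s / 2 + \<psi>4 s * x s / 12) * u1 s)) \<and>
     (\<forall>t. \<psi>3 t = \<psi>3 0 + (LBINT s=0..ereal t. \<psi>4 s * u1 s / 2)) \<and>
     (\<forall>t. \<psi>4 t = \<psi>4 0) \<and>
     (\<forall>t. (\<psi>1 t, \<psi>2 t, \<psi>3 t, \<psi>4 t) \<noteq> (0, 0, 0, 0)) \<and>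
     (AE t in lborel.
        ham1 (\<psi>1 t) (\<psi>3 t) (\<psi>4 t) (x t) (y t) (z t) * u1 t
          + ham2 (\<psi>2 t) (\<psi>3 t) (\<psi>4 t) (x t) * u2 t
        = F_U F (ham1 (\<psi>1 t) (\<psi>3 t) (\<psi>4 t) (x t) (y t) (z t), ham2 (\<psi>2 t) (\<psi>3 t) (\<psi>4 t) (x t))
      \<and> F_U F (ham1 (\<psi>1 t) (\<psi>3 t) (\<psi>4 t) (x t) (y t) (z t), ham2 (\<psi>2 t) (\<psi>3 t) (\<psi>4 t) (x t)) = 1)"

end

theory Submission
  imports Defs
begin


definition lbm :: "(real \<Rightarrow> real) \<Rightarrow> bool" where
  "lbm f \<longleftrightarrow> f \<in> borel_measurable lborel \<and> (\<forall>T. \<exists>M. \<forall>t. \<bar>t\<bar> \<le> T \<longrightarrow> \<bar>f t\<bar> \<le> M)"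

definition II :: "(real \<Rightarrow> real) \<Rightarrow> real \<Rightarrow> real" where
  "II f t = (LBINT s=0..ereal t. f s)"

lemma lbm_set_integrable:
  assumes "lbm f" shows "set_integrable lborel {a..b} f"
proof -
  obtain M where M: "\<And>t. \<bar>t\<bar> \<le> max \<bar>a\<bar> \<bar>b\<bar> \<Longrightarrow> \<bar>f t\<bar> \<le> M"
    using assms unfolding lbm_def by blast
  have m: "f \<in> borel_measurable lborel" using assms unfolding lbm_def by blast
  show ?thesis unfolding set_integrable_def
    by (rule integrableI_bounded_set_indicator[where B=M]) (use m M in \<open>auto simp: emeasure_lborel_Icc_eq\<close>)
qed

lemma lbm_interval_integrable:
  assumes "lbm f" shows "interval_lebesgue_integrable lborel (ereal a) (ereal b) f"
  unfolding interval_lebesgue_integrable_def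
  using set_integrable_subset[OF lbm_set_integrable[OF assms, of a b], of "{a<..<b}"]
        set_integrable_subset[OF lbm_set_integrable[OF assms, of b a], of "{b<..<a}"]
  by (auto simp: subset_iff)

lemma II_diff:
  assumes "lbm f" shows "II f b - II f a = (LBINT s=ereal a..ereal b. f s)"
proof -
  have "(LBINT s=ereal 0..ereal a. f s) + (LBINT s=ereal a..ereal b. f s) = (LBINT s=ereal 0..ereal b. f s)"
    apply (rule interval_integral_sum)
    using lbm_interval_integrable[OF assms, of "min 0 (min a b)" "max 0 (max a b)"]
    by (simp add: min_def max_def split: if_splits)
  then show ?thesis unfolding II_def by (simp add: zero_ereal_def)
qed

lemma LBINT_eq_integral:
  assumes "lbm f" "a \<le> b" shows "(LBINT s=ereal a..ereal b. f s) = integral {a..b} f"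
  using interval_integral_eq_integral[OF assms(2) lbm_set_integrable[OF assms(1)]] by simp

lemma lbm_integrable_on:
  assumes "lbm f" shows "f integrable_on {a..b}"
  using lbm_set_integrable[OF assms] set_borel_integral_eq_integral(1) by blast

lemma II_0[simp]: "II f 0 = 0"
  unfolding II_def by (simp add: zero_ereal_def)

lemma lbm_reflect: "lbm f \<Longrightarrow> lbm (\<lambda>s. f (-s))"
  unfolding lbm_def by (auto simp: measurable_compose[of uminus]) (metis abs_minus_cancel)

lemma II_quot_right:
  assumes "lbm f" "h > 0"
  shows "(II f (y + h) - II f y) / h = integral {y..y+h} f / h"
  using II_diff[OF assms(1), of "y+h" y] LBINT_eq_integral[OF assms(1), of y "y+h"] assms(2) by simp

lemma II_quot_left:
  assumes "lbm f" "h < 0"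
  shows "(II f (y + h) - II f y) / h = integral {y+h..y} f / (-h)"
proof -
  have "II f y - II f (y+h) = integral {y+h..y} f"
    using II_diff[OF assms(1), of y "y+h"] LBINT_eq_integral[OF assms(1), of "y+h" y] assms(2) by simp
  then show ?thesis using assms(2) by (simp add: field_simps)
qed

lemma negligible_AE:
  assumes "negligible N" shows "AE x in lborel. x \<notin> N"
proof -
  have "N \<in> null_sets lebesgue" using assms negligible_iff_null_sets by blast
  then have "AE x in lebesgue. x \<notin> N" using AE_not_in by blast
  then show ?thesis using AE_completion_iff by blast
qed

lemma lebesgue_diff:
  assumes "lbm f"
  shows "AE t in lborel. (II f has_real_derivative f t) (at t)"
proof -
  have i1: "\<And>a b::real. f integrable_on cbox a b" using lbm_integrable_on[OF assms] by simp
  have i2: "\<And>a b::real. (\<lambda>s. f (-s)) integrable_on cbox a b"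
    using lbm_integrable_on[OF lbm_reflect[OF assms]] by simp
  obtain N1 where N1: "negligible N1" "\<And>x e. \<lbrakk>x \<notin> N1; 0 < e\<rbrakk> \<Longrightarrow>
               \<exists>d>0. \<forall>h. 0 < h \<and> h < d \<longrightarrow>
                         norm(integral (cbox x (x + h *\<^sub>R One)) f /\<^sub>R h ^ DIM(real) - f x) < e"
    using integrable_ccontinuous_explicit[OF i1] by metis
  obtain N2 where N2: "negligible N2" "\<And>x e. \<lbrakk>x \<notin> N2; 0 < e\<rbrakk> \<Longrightarrow>
               \<exists>d>0. \<forall>h. 0 < h \<and> h < d \<longrightarrow>
                         norm(integral (cbox x (x + h *\<^sub>R One)) (\<lambda>s. f (-s)) /\<^sub>R h ^ DIM(real) - f (- x)) < e"
    using integrable_ccontinuous_explicit[OF i2] by metis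
  have negN: "negligible (N1 \<union> uminus ` N2)"
    using N1(1) negligible_differentiable_image_negligible[OF _ N2(1), of uminus]
    by (auto intro!: derivative_intros simp: differentiable_on_def)
  have "(II f has_real_derivative f y) (at y)" if y: "y \<notin> N1 \<union> uminus ` N2" for y
  proof -
    have yn1: "y \<notin> N1" and yn2: "-y \<notin> N2" using y by (auto simp: image_iff)
    show ?thesis
      unfolding DERIV_def LIM_eq
    proof (intro allI impI)
      fix e :: real assume e: "e > 0"
      obtain d1 where d1: "d1 > 0" "\<And>h. 0 < h \<Longrightarrow> h < d1 \<Longrightarrow> \<bar>integral {y..y+h} f / h - f y\<bar> < e"
        using N1(2)[OF yn1 e] by (fastforce simp: divide_inverse mult.commute)
      obtain d2 where d2: "d2 > 0" "\<And>h. 0 < h \<Longrightarrow> h < d2 \<Longrightarrow> \<bar>integral {-y..-y+h} (\<lambda>s. f (-s)) / h - f y\<bar> < e"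
        using N2(2)[OF yn2 e] by (fastforce simp: divide_inverse mult.commute)
      show "\<exists>s>0. \<forall>h. h \<noteq> 0 \<and> norm (h - 0) < s \<longrightarrow> norm ((II f (y + h) - II f y) / h - f y) < e"
      proof (intro exI[of _ "min d1 d2"] conjI allI impI)
        show "min d1 d2 > 0" using d1 d2 by simp
        fix h :: real assume h: "h \<noteq> 0 \<and> norm (h - 0) < min d1 d2"
        show "norm ((II f (y + h) - II f y) / h - f y) < e"
        proof (cases "h > 0")
          case True
          then show ?thesis using II_quot_right[OF assms True, of y] d1(2)[of h] h by simp
        next
          case False
          then have hn: "h < 0" using h by simp
          have "integral {-y..-y+(-h)} (\<lambda>s. f (-s)) = integral {y+h..y} f"
            using Henstock_Kurzweil_Integration.integral_reflect_real[of "y" "y+h" f] by simp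
          then show ?thesis using II_quot_left[OF assms hn, of y] d2(2)[of "-h"] h hn by simp
        qed
      qed
    qed
  qed
  then show ?thesis using negligible_AE[OF negN] by (auto elim!: AE_mp)
qed

lemma zero_deriv_image_negligible:
  fixes H :: "real \<Rightarrow> real"
  assumes der: "\<And>x. x \<in> S \<Longrightarrow> (H has_real_derivative 0) (at x)"
  shows "negligible (H ` S)"
proof -
  let ?f = "\<lambda>v::real^1. vec (H (v $ 1)) :: real^1"
  have e2: "((*\<^sub>R) (0::real)) = (\<lambda>x::real^1. 0)" by auto
  have d: "(?f has_derivative (\<lambda>x. 0 *\<^sub>R x)) (at v within vec ` S)" if v: "v \<in> vec ` S" for v
  proof -
    obtain a where a: "a \<in> S" "v = vec a" using v by (auto simp: image_iff)
    have "(H has_derivative (\<lambda>x. x * 0)) (at a within S)"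
    proof -
      have e: "((*) (0::real)) = (\<lambda>x. 0)" by auto
      show ?thesis using has_derivative_at_withinI[of H "(*) 0" a S] der[OF a(1)]
        by (simp add: has_field_derivative_def e)
    qed
    from has_derivative_vector_1[of H "\<lambda>_. 0", OF this] show ?thesis using a
      by (simp add: e2)
  qed
  have m: "matrix (\<lambda>x::real^1. 0 *\<^sub>R x) = (0::real^1^1)"
    by (simp add: matrix_def vec_eq_iff)
  have "negligible (?f ` vec ` S)"
    by (rule baby_Sard[where f' = "\<lambda>_ x. 0 *\<^sub>R x"]) (use d m in auto)
  moreover have "?f ` vec ` S = vec ` (H ` S)" by (auto simp: image_image)
  ultimately have n1: "negligible (vec ` (H ` S) :: (real^1) set)" by simp
  have "negligible ((\<lambda>v::real^1. v $ 1) ` (vec ` (H ` S)))"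
    by (rule negligible_differentiable_image_negligible[OF _ n1])
       (auto intro!: bounded_linear_imp_differentiable_on bounded_linear_vec_nth)
  moreover have "(\<lambda>v::real^1. v $ 1) ` (vec ` (H ` S)) = H ` S" by (auto simp: image_image)
  ultimately show ?thesis by simp
qed

lemma const_lemma:
  fixes H :: "real \<Rightarrow> real"
  assumes ab: "a \<le> b"
    and lip: "\<And>s t. s \<in> {a..b} \<Longrightarrow> t \<in> {a..b} \<Longrightarrow> \<bar>H s - H t\<bar> \<le> L * \<bar>s - t\<bar>"
    and der: "AE t in lborel. t \<in> {a<..<b} \<longrightarrow> (H has_real_derivative 0) (at t)"
  shows "H a = H b"
proof -
  obtain N where N: "{t \<in> space lborel. \<not> (t \<in> {a<..<b} \<longrightarrow> (H has_real_derivative 0) (at t))} \<subseteq> N"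
    "N \<in> null_sets lborel"
    using der unfolding eventually_ae_filter by blast
  have negN: "negligible N"
    using N(2) null_sets_completionI negligible_iff_null_sets by blast
  define S1 where "S1 = {a..b} \<inter> (N \<union> {a,b})"
  define S2 where "S2 = {a<..<b} - N"
  have n1: "negligible (H ` S1)"
  proof (rule negligible_locally_Lipschitz_image)
    show "negligible S1" unfolding S1_def
      by (rule negligible_subset[of "N \<union> {a,b}"]) (use negN in auto)
    show "\<exists>T B. open T \<and> x \<in> T \<and> (\<forall>y \<in> S1 \<inter> T. norm (H y - H x) \<le> B * norm (y - x))"
      if x: "x \<in> S1" for x
    proof (intro exI[of _ UNIV] exI[of _ L] conjI ballI)
      fix y assume "y \<in> S1 \<inter> UNIV"
      then show "norm (H y - H x) \<le> L * norm (y - x)" using lip[of y x] x ab by (auto simp: S1_def)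
    qed auto
  qed auto
  have n2: "negligible (H ` S2)"
    by (rule zero_deriv_image_negligible) (use N(1) in \<open>auto simp: S2_def\<close>)
  have "{a..b} \<subseteq> S1 \<union> S2" unfolding S1_def S2_def by auto
  then have "H ` {a..b} \<subseteq> H ` S1 \<union> H ` S2" by auto
  then have nab: "negligible (H ` {a..b})"
    using negligible_subset[of "H ` S1 \<union> H ` S2" "H ` {a..b}"] n1 n2 by simp
  have contH: "continuous_on {a..b} H"
  proof (cases "L \<le> 0")
    case True
    have c: "H s = H a" if s: "s \<in> {a..b}" for s
    proof -
      have "\<bar>H s - H a\<bar> \<le> L * \<bar>s - a\<bar>" using s ab by (intro lip) simp_all
      moreover have "L * \<bar>s - a\<bar> \<le> 0" using True by (simp add: mult_nonpos_nonneg)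
      ultimately show "H s = H a" by simp
    qed
    show ?thesis
      by (rule continuous_on_eq[OF continuous_on_const[of _ "H a"]]) (metis c)
  next
    case False
    show ?thesis unfolding continuous_on_iff
    proof (intro ballI allI impI)
      fix x e :: real assume "x \<in> {a..b}" "e > 0"
      show "\<exists>d>0. \<forall>x'\<in>{a..b}. dist x' x < d \<longrightarrow> dist (H x') (H x) < e"
      proof (intro exI[of _ "e / L"] conjI ballI impI)
        show "e / L > 0" using False \<open>e>0\<close> by simp
        fix x' assume x': "x' \<in> {a..b}" "dist x' x < e / L"
        have "\<bar>H x' - H x\<bar> \<le> L * \<bar>x' - x\<bar>" using lip x'(1) \<open>x \<in> {a..b}\<close> by blast
        also have "\<dots> < e" using x'(2) False
          by (simp add: dist_real_def pos_less_divide_eq mult.commute)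
        finally show "dist (H x') (H x) < e" by (simp add: dist_real_def)
      qed
    qed
  qed
  have conn: "connected (H ` {a..b})"
    by (rule connected_continuous_image[OF contH]) simp
  have ha: "H a \<in> H ` {a..b}" "H b \<in> H ` {a..b}" using ab by auto
  show ?thesis
  proof (rule ccontr)
    assume ne: "H a \<noteq> H b"
    have sub: "{min (H a) (H b)..max (H a) (H b)} \<subseteq> H ` {a..b}"
      using connected_contains_Icc[OF conn] ha by (auto simp: min_def max_def)
    have "negligible {min (H a) (H b)..max (H a) (H b)}"
      using negligible_subset[OF nab sub] .
    then show False using ne negligible_interval(1)[of "min (H a) (H b)" "max (H a) (H b)"]
      by (auto simp: min_def max_def split: if_splits)
  qed
qed

definition LIP :: "real \<Rightarrow> real \<Rightarrow> (real \<Rightarrow> real) \<Rightarrow> bool" where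
  "LIP a b f \<longleftrightarrow> (\<exists>L\<ge>0. \<forall>s\<in>{a..b}. \<forall>t\<in>{a..b}. \<bar>f s - f t\<bar> \<le> L * \<bar>s - t\<bar>)"

definition llip :: "(real \<Rightarrow> real) \<Rightarrow> bool" where
  "llip f \<longleftrightarrow> (\<forall>a b. LIP a b f)"

lemma LIP_const[simp]: "LIP a b (\<lambda>_. c)"
  unfolding LIP_def by (intro exI[of _ 0]) auto

lemma LIP_id[simp]: "LIP a b (\<lambda>t. t)"
  unfolding LIP_def by (intro exI[of _ 1]) auto

lemma LIP_add:
  assumes "LIP a b f" "LIP a b g" shows "LIP a b (\<lambda>t. f t + g t)"
proof -
  obtain L1 where L1: "L1 \<ge> 0" "\<forall>s\<in>{a..b}. \<forall>t\<in>{a..b}. \<bar>f s - f t\<bar> \<le> L1 * \<bar>s - t\<bar>"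
    using assms(1) unfolding LIP_def by blast
  obtain L2 where L2: "L2 \<ge> 0" "\<forall>s\<in>{a..b}. \<forall>t\<in>{a..b}. \<bar>g s - g t\<bar> \<le> L2 * \<bar>s - t\<bar>"
    using assms(2) unfolding LIP_def by blast
  show ?thesis unfolding LIP_def
  proof (intro exI[of _ "L1 + L2"] conjI ballI)
    fix s t assume st: "s \<in> {a..b}" "t \<in> {a..b}"
    have "\<bar>(f s + g s) - (f t + g t)\<bar> \<le> \<bar>f s - f t\<bar> + \<bar>g s - g t\<bar>" by simp
    also have "\<dots> \<le> L1 * \<bar>s - t\<bar> + L2 * \<bar>s - t\<bar>" using L1 L2 st by (meson add_mono)
    finally show "\<bar>(f s + g s) - (f t + g t)\<bar> \<le> (L1 + L2) * \<bar>s - t\<bar>" by (simp add: distrib_right)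
  qed (use L1 L2 in auto)
qed

lemma LIP_uminus:
  assumes "LIP a b f" shows "LIP a b (\<lambda>t. - f t)"
proof -
  obtain L where L: "L \<ge> 0" "\<forall>s\<in>{a..b}. \<forall>t\<in>{a..b}. \<bar>f s - f t\<bar> \<le> L * \<bar>s - t\<bar>"
    using assms unfolding LIP_def by blast
  have "\<bar>- f s - - f t\<bar> = \<bar>f s - f t\<bar>" for s t by linarith
  then show ?thesis unfolding LIP_def using L by (intro exI[of _ L]) simp
qed

lemma LIP_diff:
  assumes "LIP a b f" "LIP a b g" shows "LIP a b (\<lambda>t. f t - g t)"
  using LIP_add[OF assms(1) LIP_uminus[OF assms(2)]] by simp

lemma LIP_bounded:
  assumes "LIP a b f" obtains M where "M \<ge> 0" "\<And>t. t \<in> {a..b} \<Longrightarrow> \<bar>f t\<bar> \<le> M"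
proof -
  obtain L where L: "L \<ge> 0" "\<forall>s\<in>{a..b}. \<forall>t\<in>{a..b}. \<bar>f s - f t\<bar> \<le> L * \<bar>s - t\<bar>"
    using assms unfolding LIP_def by blast
  have "\<bar>f t\<bar> \<le> \<bar>f a\<bar> + L * (b - a)" if t: "t \<in> {a..b}" for t
  proof -
    have a: "a \<in> {a..b}" using t by auto
    have "\<bar>f t - f a\<bar> \<le> L * \<bar>t - a\<bar>" using L(2) t a by blast
    also have "\<dots> \<le> L * (b - a)" using t L(1) by (intro mult_left_mono) auto
    finally show ?thesis by linarith
  qed
  moreover have "a \<le> b \<Longrightarrow> 0 \<le> \<bar>f a\<bar> + L * (b - a)" using L(1) by simp
  show ?thesis
  proof (cases "a \<le> b")
    case True
    show ?thesis by (rule that[of "\<bar>f a\<bar> + L * (b - a)"]) (use calculation True L(1) in \<open>auto intro: add_nonneg_nonneg mult_nonneg_nonneg\<close>)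
  next
    case False
    show ?thesis by (rule that[of 0]) (use False in auto)
  qed
qed

lemma LIP_mult:
  assumes "LIP a b f" "LIP a b g" shows "LIP a b (\<lambda>t. f t * g t)"
proof -
  obtain L1 where L1: "L1 \<ge> 0" "\<forall>s\<in>{a..b}. \<forall>t\<in>{a..b}. \<bar>f s - f t\<bar> \<le> L1 * \<bar>s - t\<bar>"
    using assms(1) unfolding LIP_def by blast
  obtain L2 where L2: "L2 \<ge> 0" "\<forall>s\<in>{a..b}. \<forall>t\<in>{a..b}. \<bar>g s - g t\<bar> \<le> L2 * \<bar>s - t\<bar>"
    using assms(2) unfolding LIP_def by blast
  obtain M1 where M1: "M1 \<ge> 0" "\<And>t. t \<in> {a..b} \<Longrightarrow> \<bar>f t\<bar> \<le> M1" using LIP_bounded[OF assms(1)] by blast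
  obtain M2 where M2: "M2 \<ge> 0" "\<And>t. t \<in> {a..b} \<Longrightarrow> \<bar>g t\<bar> \<le> M2" using LIP_bounded[OF assms(2)] by blast
  show ?thesis unfolding LIP_def
  proof (intro exI[of _ "M1 * L2 + M2 * L1"] conjI ballI)
    fix s t assume st: "s \<in> {a..b}" "t \<in> {a..b}"
    have "f s * g s - f t * g t = f s * (g s - g t) + g t * (f s - f t)" by (simp add: algebra_simps)
    then have "\<bar>f s * g s - f t * g t\<bar> \<le> \<bar>f s\<bar> * \<bar>g s - g t\<bar> + \<bar>g t\<bar> * \<bar>f s - f t\<bar>"
      by (metis abs_mult abs_triangle_ineq)
    also have "\<dots> \<le> M1 * (L2 * \<bar>s - t\<bar>) + M2 * (L1 * \<bar>s - t\<bar>)"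
      using L1 L2 M1 M2 st by (intro add_mono mult_mono) auto
    finally show "\<bar>f s * g s - f t * g t\<bar> \<le> (M1 * L2 + M2 * L1) * \<bar>s - t\<bar>"
      by (simp add: algebra_simps)
  qed (use L1 L2 M1 M2 in auto)
qed

lemma LIP_cmult: "LIP a b f \<Longrightarrow> LIP a b (\<lambda>t. c * f t)"
  using LIP_mult[OF LIP_const] by blast

lemma LIP_divide: "LIP a b f \<Longrightarrow> LIP a b (\<lambda>t. f t / c)"
  using LIP_cmult[of a b f "inverse c"] by (simp add: divide_inverse mult.commute)

lemma LIP_inverse:
  assumes "LIP a b f" "c > 0" "\<And>t. t \<in> {a..b} \<Longrightarrow> \<bar>f t\<bar> \<ge> c"
  shows "LIP a b (\<lambda>t. 1 / f t)"
proof -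
  obtain L where L: "L \<ge> 0" "\<forall>s\<in>{a..b}. \<forall>t\<in>{a..b}. \<bar>f s - f t\<bar> \<le> L * \<bar>s - t\<bar>"
    using assms(1) unfolding LIP_def by blast
  show ?thesis unfolding LIP_def
  proof (intro exI[of _ "L / c^2"] conjI ballI)
    fix s t assume st: "s \<in> {a..b}" "t \<in> {a..b}"
    have cs: "\<bar>f s\<bar> \<ge> c" "\<bar>f t\<bar> \<ge> c" using assms(3) st by auto
    then have nz: "f s \<noteq> 0" "f t \<noteq> 0" using assms(2) by auto
    have "1 / f s - 1 / f t = (f t - f s) / (f s * f t)" using nz by (simp add: field_simps)
    then have "\<bar>1 / f s - 1 / f t\<bar> = \<bar>f s - f t\<bar> / (\<bar>f s\<bar> * \<bar>f t\<bar>)"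
      by (simp add: abs_mult abs_minus_commute)
    also have "\<dots> \<le> (L * \<bar>s - t\<bar>) / (c * c)"
      using L st cs assms(2) by (intro frac_le mult_mono) auto
    finally show "\<bar>1 / f s - 1 / f t\<bar> \<le> L / c^2 * \<bar>s - t\<bar>" by (simp add: power2_eq_square)
  qed (use L assms(2) in auto)
qed

lemma LIP_compose:
  assumes "LIP a b f" "K \<ge> 0" "\<And>u w. \<bar>g u - g w\<bar> \<le> K * \<bar>u - w\<bar>"
  shows "LIP a b (\<lambda>t. g (f t))"
proof -
  obtain L where L: "L \<ge> 0" "\<forall>s\<in>{a..b}. \<forall>t\<in>{a..b}. \<bar>f s - f t\<bar> \<le> L * \<bar>s - t\<bar>"
    using assms(1) unfolding LIP_def by blast
  show ?thesis unfolding LIP_def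
  proof (intro exI[of _ "K * L"] conjI ballI)
    fix s t assume st: "s \<in> {a..b}" "t \<in> {a..b}"
    have "\<bar>g (f s) - g (f t)\<bar> \<le> K * \<bar>f s - f t\<bar>" by (rule assms(3))
    also have "\<dots> \<le> K * (L * \<bar>s - t\<bar>)" using L st assms(2) by (intro mult_left_mono) auto
    finally show "\<bar>g (f s) - g (f t)\<bar> \<le> K * L * \<bar>s - t\<bar>" by (simp add: mult.assoc)
  qed (use L assms(2) in auto)
qed

lemma arctan_lip: "\<bar>arctan u - arctan w\<bar> \<le> 1 * \<bar>u - w\<bar>"
proof -
  have *: "arctan b - arctan a \<le> b - a" if ab: "a < b" for a b
  proof -
    obtain z where "a < z" "z < b" "arctan b - arctan a = (b - a) * inverse (1 + z^2)"
      using MVT2[OF ab, of arctan "\<lambda>z. inverse (1 + z^2)"] by (auto intro: DERIV_arctan)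
    moreover have "inverse (1 + z^2) \<le> 1" by (simp add: add_pos_nonneg inverse_le_1_iff)
    ultimately show ?thesis using ab mult_left_mono[of "inverse (1 + z^2)" 1 "b - a"] by simp
  qed
  have m: "a < b \<Longrightarrow> arctan a < arctan b" for a b by (simp add: arctan_less_iff)
  show ?thesis
  proof (cases u w rule: linorder_cases)
    case less
    then show ?thesis using *[of u w] m[of u w] by simp
  next
    case equal
    then show ?thesis by simp
  next
    case greater
    then show ?thesis using *[of w u] m[of w u] by simp
  qed
qed

lemma LIP_subset: "LIP a b f \<Longrightarrow> a \<le> c \<Longrightarrow> d \<le> b \<Longrightarrow> LIP c d f"
  unfolding LIP_def
proof (elim exE conjE, intro exI conjI ballI)
  fix L s t assume L: "L \<ge> 0" "\<forall>s\<in>{a..b}. \<forall>t\<in>{a..b}. \<bar>f s - f t\<bar> \<le> L * \<bar>s - t\<bar>"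
    and h: "a \<le> c" "d \<le> b" "s \<in> {c..d}" "t \<in> {c..d}"
  from h have "s \<in> {a..b}" "t \<in> {a..b}" by auto
  with L show "\<bar>f s - f t\<bar> \<le> L * \<bar>s - t\<bar>" by blast
qed

lemma LIP_cont:
  assumes "LIP a b f" shows "continuous_on {a..b} f"
proof -
  obtain L where L0: "L \<ge> 0" "\<forall>s\<in>{a..b}. \<forall>t\<in>{a..b}. \<bar>f s - f t\<bar> \<le> L * \<bar>s - t\<bar>"
    using assms unfolding LIP_def by blast
  have L: "L \<ge> 0" "\<And>s t. s\<in>{a..b} \<Longrightarrow> t\<in>{a..b} \<Longrightarrow> \<bar>f s - f t\<bar> \<le> (L + 1) * \<bar>s - t\<bar>"
  proof -
    show "L \<ge> 0" by fact
    fix s t assume "s\<in>{a..b}" "t\<in>{a..b}"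
    then have "\<bar>f s - f t\<bar> \<le> L * \<bar>s - t\<bar>" using L0 by blast
    also have "\<dots> \<le> (L + 1) * \<bar>s - t\<bar>" by (simp add: distrib_right)
    finally show "\<bar>f s - f t\<bar> \<le> (L + 1) * \<bar>s - t\<bar>" .
  qed
  show ?thesis unfolding continuous_on_iff
  proof (intro ballI allI impI)
    fix x e :: real assume x: "x \<in> {a..b}" and e: "e > 0"
    show "\<exists>d>0. \<forall>x'\<in>{a..b}. dist x' x < d \<longrightarrow> dist (f x') (f x) < e"
    proof (intro exI[of _ "e / (L + 1)"] conjI ballI impI)
      show "e / (L + 1) > 0" using L(1) e by simp
      fix x' assume x': "x' \<in> {a..b}" "dist x' x < e / (L + 1)"
      have "\<bar>f x' - f x\<bar> \<le> (L + 1) * \<bar>x' - x\<bar>" using L(2) x'(1) x by blast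
      also have "\<dots> < e" using x'(2) L(1)
        by (simp add: dist_real_def pos_less_divide_eq mult.commute)
      finally show "dist (f x') (f x) < e" by (simp add: dist_real_def)
    qed
  qed
qed

lemma llip_cont: assumes "llip f" shows "continuous_on UNIV f"
proof -
  have "isCont f t" for t
    using continuous_on_interior[OF LIP_cont[of "t-1" "t+1" f]] assms unfolding llip_def by simp
  then show ?thesis by (simp add: continuous_at_imp_continuous_on)
qed

lemma llip_intros:
  "llip (\<lambda>_. c)" "llip (\<lambda>t. t)"
  "llip f \<Longrightarrow> llip g \<Longrightarrow> llip (\<lambda>t. f t + g t)"
  "llip f \<Longrightarrow> llip g \<Longrightarrow> llip (\<lambda>t. f t - g t)"
  "llip f \<Longrightarrow> llip g \<Longrightarrow> llip (\<lambda>t. f t * g t)"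
  "llip f \<Longrightarrow> llip (\<lambda>t. - f t)"
  "llip f \<Longrightarrow> llip (\<lambda>t. f t / c)"
  unfolding llip_def by (simp_all add: LIP_add LIP_diff LIP_mult LIP_uminus LIP_divide)

lemma lbm_cont:
  assumes "continuous_on UNIV f" shows "lbm f"
  unfolding lbm_def
proof (intro conjI allI)
  show "f \<in> borel_measurable lborel" using borel_measurable_continuous_onI[OF assms] by simp
  fix T :: real
  have "compact (f ` {-T..T})" by (rule compact_continuous_image) (use assms continuous_on_subset in auto)
  then obtain B where "\<forall>y\<in>f ` {-T..T}. norm y \<le> B" using compact_imp_bounded bounded_iff by metis
  then show "\<exists>M. \<forall>t. \<bar>t\<bar> \<le> T \<longrightarrow> \<bar>f t\<bar> \<le> M"
  proof (intro exI[of _ B] allI impI)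
    fix t :: real assume "\<bar>t\<bar> \<le> T"
    then have "t \<in> {-T..T}" by auto
    then show "\<bar>f t\<bar> \<le> B" using \<open>\<forall>y\<in>f ` {-T..T}. norm y \<le> B\<close> by auto
  qed
qed

lemma lbm_mult:
  assumes "lbm f" "lbm g" shows "lbm (\<lambda>t. f t * g t)"
  unfolding lbm_def
proof (intro conjI allI)
  show "(\<lambda>t. f t * g t) \<in> borel_measurable lborel" using assms unfolding lbm_def
    by (auto intro!: borel_measurable_times)
  fix T :: real
  obtain M1 where M1: "\<forall>t. \<bar>t\<bar> \<le> T \<longrightarrow> \<bar>f t\<bar> \<le> M1" using assms(1) unfolding lbm_def by blast
  obtain M2 where M2: "\<forall>t. \<bar>t\<bar> \<le> T \<longrightarrow> \<bar>g t\<bar> \<le> M2" using assms(2) unfolding lbm_def by blast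
  show "\<exists>M. \<forall>t. \<bar>t\<bar> \<le> T \<longrightarrow> \<bar>f t * g t\<bar> \<le> M"
  proof (intro exI[of _ "M1 * M2"] allI impI)
    fix t assume "\<bar>t\<bar> \<le> T"
    then show "\<bar>f t * g t\<bar> \<le> M1 * M2" using M1 M2 by (simp add: abs_mult mult_mono')
  qed
qed

lemma lbm_add:
  assumes "lbm f" "lbm g" shows "lbm (\<lambda>t. f t + g t)"
  unfolding lbm_def
proof (intro conjI allI)
  show "(\<lambda>t. f t + g t) \<in> borel_measurable lborel" using assms unfolding lbm_def
    by (auto intro!: borel_measurable_add)
  fix T :: real
  obtain M1 where M1: "\<forall>t. \<bar>t\<bar> \<le> T \<longrightarrow> \<bar>f t\<bar> \<le> M1" using assms(1) unfolding lbm_def by blast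
  obtain M2 where M2: "\<forall>t. \<bar>t\<bar> \<le> T \<longrightarrow> \<bar>g t\<bar> \<le> M2" using assms(2) unfolding lbm_def by blast
  show "\<exists>M. \<forall>t. \<bar>t\<bar> \<le> T \<longrightarrow> \<bar>f t + g t\<bar> \<le> M"
  proof (intro exI[of _ "M1 + M2"] allI impI)
    fix t assume "\<bar>t\<bar> \<le> T"
    then have "\<bar>f t\<bar> \<le> M1" "\<bar>g t\<bar> \<le> M2" using M1 M2 by auto
    then show "\<bar>f t + g t\<bar> \<le> M1 + M2" by linarith
  qed
qed

lemma lbm_const[simp]: "lbm (\<lambda>_. c)" by (rule lbm_cont) simp

lemma lbm_uminus: "lbm f \<Longrightarrow> lbm (\<lambda>t. - f t)"
  using lbm_mult[OF lbm_const[of "-1"]] by simp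

lemma lbm_diff: "lbm f \<Longrightarrow> lbm g \<Longrightarrow> lbm (\<lambda>t. f t - g t)"
  using lbm_add[of f "\<lambda>t. - g t"] lbm_uminus by simp

lemma lbm_divide: "lbm f \<Longrightarrow> lbm (\<lambda>t. f t / c)"
  using lbm_mult[OF _ lbm_const[of "inverse c"], of f] by (simp add: divide_inverse)

lemma LIP_II:
  assumes "lbm g" shows "LIP a b (II g)"
proof -
  obtain M where M: "\<forall>t. \<bar>t\<bar> \<le> max \<bar>a\<bar> \<bar>b\<bar> \<longrightarrow> \<bar>g t\<bar> \<le> M" using assms unfolding lbm_def by blast
  have key: "\<bar>II g s - II g t\<bar> \<le> max M 0 * \<bar>s - t\<bar>" if st: "s \<in> {a..b}" "t \<in> {a..b}" "t \<le> s" for s t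
  proof -
    have e: "II g s - II g t = integral {t..s} g"
      using II_diff[OF assms, of s t] LBINT_eq_integral[OF assms st(3)] by simp
    have hi: "(g has_integral integral {t..s} g) {t..s}"
      using lbm_integrable_on[OF assms] by blast
    have bd: "\<And>x. x \<in> {t..s} - {} \<Longrightarrow> norm (g x) \<le> max M 0"
    proof -
      fix x assume "x \<in> {t..s} - {}"
      then have "\<bar>x\<bar> \<le> max \<bar>a\<bar> \<bar>b\<bar>" using st by auto
      then show "norm (g x) \<le> max M 0" using M by fastforce
    qed
    have "norm (integral {t..s} g) \<le> max M 0 * measure lborel {t..s}"
      by (rule has_integral_bound_real[OF _ _ hi bd]) auto
    then have "norm (integral {t..s} g) \<le> max M 0 * (s - t)" using st by simp
    then show ?thesis using st e by simp
  qed
  show ?thesis unfolding LIP_def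
  proof (intro exI[of _ "max M 0"] conjI ballI)
    fix s t assume "s \<in> {a..b}" "t \<in> {a..b}"
    then show "\<bar>II g s - II g t\<bar> \<le> max M 0 * \<bar>s - t\<bar>"
    proof (cases "t \<le> s")
      case True
      then show ?thesis using key[of s t] \<open>s \<in> {a..b}\<close> \<open>t \<in> {a..b}\<close> by blast
    next
      case False
      then have "\<bar>II g t - II g s\<bar> \<le> max M 0 * \<bar>t - s\<bar>"
        using key[of t s] \<open>s \<in> {a..b}\<close> \<open>t \<in> {a..b}\<close> by simp
      then show ?thesis by (simp add: abs_minus_commute)
    qed
  qed simp
qed

lemma llip_II: "lbm g \<Longrightarrow> llip (II g)"
  unfolding llip_def using LIP_II by blast

lemma LIP_const_lemma:
  assumes "LIP a b H" "a \<le> b" "AE t in lborel. t \<in> {a<..<b} \<longrightarrow> (H has_real_derivative 0) (at t)"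
  shows "H a = H b"
proof -
  obtain L where L: "\<forall>s\<in>{a..b}. \<forall>t\<in>{a..b}. \<bar>H s - H t\<bar> \<le> L * \<bar>s - t\<bar>"
    using assms(1) unfolding LIP_def by blast
  show ?thesis by (rule const_lemma[OF assms(2) _ assms(3), of L]) (use L in blast)
qed

lemma llip_const_lemma:
  assumes "llip H" "AE t in lborel. (H has_real_derivative 0) (at t)"
  shows "H t = H 0"
proof -
  have "H (min 0 t) = H (max 0 t)"
    by (rule LIP_const_lemma) (use assms in \<open>auto simp: llip_def elim!: AE_mp\<close>)
  then show ?thesis by (cases "0 \<le> t") (auto simp: min_def max_def)
qed

lemma ftc_II:
  assumes "llip G" "lbm g" "AE t in lborel. (G has_real_derivative g t) (at t)"
  shows "G t = G 0 + II g t"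
proof -
  let ?H = "\<lambda>s. G s - II g s"
  have "llip ?H" using assms(1) llip_II[OF assms(2)] by (rule llip_intros)
  moreover have "AE t in lborel. (?H has_real_derivative 0) (at t)"
    using assms(3) lebesgue_diff[OF assms(2)]
  proof (eventually_elim)
    case (elim t)
    then show ?case using DERIV_diff[OF elim(1) elim(2)] by simp
  qed
  ultimately have "?H t = ?H 0" by (rule llip_const_lemma)
  then show ?thesis by simp
qed

lemma abs_le_norm_pair: "\<bar>a\<bar> \<le> norm (a, b::real)" "\<bar>b\<bar> \<le> norm (a::real, b)"
proof -
  have "sqrt (a\<^sup>2) \<le> sqrt (a\<^sup>2 + b\<^sup>2)" "sqrt (b\<^sup>2) \<le> sqrt (a\<^sup>2 + b\<^sup>2)"
    by (rule real_sqrt_le_mono, simp)+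
  then show "\<bar>a\<bar> \<le> norm (a, b::real)" "\<bar>b\<bar> \<le> norm (a::real, b)" by (simp_all add: norm_Pair)
qed

lemma norm2_bound:
  assumes hF: "is_norm2 F"
  obtains K where "K > 0" "\<And>a b. F (a, b) \<le> 1 \<Longrightarrow> \<bar>a\<bar> \<le> K \<and> \<bar>b\<bar> \<le> K"
proof -
  have pos: "\<And>a b. F (a, b) \<ge> 0" and zero: "\<And>a b. F (a, b) = 0 \<longleftrightarrow> a = 0 \<and> b = 0"
    and hom: "\<And>c a b. F (c * a, c * b) = \<bar>c\<bar> * F (a, b)"
    and tri: "\<And>a b c d. F (a + c, b + d) \<le> F (a, b) + F (c, d)"
    using hF unfolding is_norm2_def by blast+
  define c1 where "c1 = F (1, 0)"
  define c2 where "c2 = F (0, 1)"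
  have up: "F (a, b) \<le> \<bar>a\<bar> * c1 + \<bar>b\<bar> * c2" for a b
  proof -
    have "F (a, b) = F (a + 0, 0 + b)" by simp
    also have "\<dots> \<le> F (a, 0) + F (0, b)" by (rule tri)
    also have "F (a, 0) = \<bar>a\<bar> * c1" using hom[of a 1 0] by (simp add: c1_def)
    also have "F (0, b) = \<bar>b\<bar> * c2" using hom[of b 0 1] by (simp add: c2_def)
    finally show ?thesis .
  qed
  have c12: "c1 \<ge> 0" "c2 \<ge> 0" using pos by (auto simp: c1_def c2_def)
  have lipF: "\<bar>F p - F q\<bar> \<le> (c1 + c2) * norm (p - q)" for p q :: "real \<times> real"
  proof -
    obtain p1 p2 q1 q2 where pq: "p = (p1, p2)" "q = (q1, q2)" by (cases p, cases q)
    have n1: "\<bar>p1 - q1\<bar> \<le> norm (p - q)" "\<bar>p2 - q2\<bar> \<le> norm (p - q)"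
      using pq abs_le_norm_pair(1)[of "p1 - q1" "p2 - q2"] abs_le_norm_pair(2)[of "p2 - q2" "p1 - q1"]
      by simp_all
    have a: "F (p1, p2) \<le> F (q1, q2) + F (p1 - q1, p2 - q2)"
      using tri[of q1 "p1 - q1" q2 "p2 - q2"] by simp
    have b: "F (q1, q2) \<le> F (p1, p2) + F (p1 - q1, p2 - q2)"
      using tri[of p1 "q1 - p1" p2 "q2 - p2"] hom[of "-1" "p1 - q1" "p2 - q2"] by simp
    have "\<bar>p1 - q1\<bar> * c1 \<le> norm (p - q) * c1" "\<bar>p2 - q2\<bar> * c2 \<le> norm (p - q) * c2"
      using n1 c12 by (simp_all add: mult_right_mono)
    then have c: "F (p1 - q1, p2 - q2) \<le> (c1 + c2) * norm (p - q)"
      using up[of "p1 - q1" "p2 - q2"] by (simp add: algebra_simps)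
    show ?thesis using a b c pq by simp
  qed
  have contF: "continuous_on UNIV F"
    unfolding continuous_on_iff
  proof (intro ballI allI impI)
    fix x :: "real \<times> real" and e :: real assume "e > 0"
    show "\<exists>d>0. \<forall>x'\<in>UNIV. dist x' x < d \<longrightarrow> dist (F x') (F x) < e"
    proof (intro exI[of _ "e / (c1 + c2 + 1)"] conjI ballI impI)
      show "e / (c1 + c2 + 1) > 0" using \<open>e > 0\<close> c12 by simp
      fix x' :: "real \<times> real" assume d: "dist x' x < e / (c1 + c2 + 1)"
      have "\<bar>F x' - F x\<bar> \<le> (c1 + c2) * norm (x' - x)" by (rule lipF)
      also have "\<dots> \<le> (c1 + c2 + 1) * norm (x' - x)" by (simp add: distrib_right)
      also have "\<dots> < e" using d c12 by (simp add: dist_norm pos_less_divide_eq mult.commute)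
      finally show "dist (F x') (F x) < e" by (simp add: dist_real_def)
    qed
  qed
  have "compact (sphere (0::real \<times> real) 1)" by simp
  moreover have "sphere (0::real \<times> real) 1 \<noteq> {}"
    using sphere_eq_empty[of "0::real\<times>real" 1] by simp
  ultimately obtain p0 where p0: "p0 \<in> sphere 0 1" "\<And>p. p \<in> sphere 0 1 \<Longrightarrow> F p0 \<le> F p"
    using continuous_attains_inf[of "sphere (0::real\<times>real) 1" F] contF continuous_on_subset by blast
  have "p0 \<noteq> 0" using p0(1) by auto
  then have m: "F p0 > 0" using pos[of "fst p0" "snd p0"] zero[of "fst p0" "snd p0"]
    by (cases p0) (auto simp: zero_prod_def)
  have bnd: "norm p \<le> 1 / F p0" if Fp: "F p \<le> 1" for p :: "real \<times> real"
  proof (cases "p = 0")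
    case True then show ?thesis using m by simp
  next
    case False
    define q where "q = (1 / norm p) *\<^sub>R p"
    have "q \<in> sphere 0 1" using False by (simp add: q_def)
    then have "F p0 \<le> F q" by (rule p0(2))
    moreover have "F p = norm p * F q"
    proof -
      obtain p1 p2 where pp: "p = (p1, p2)" by (cases p)
      have nz: "norm p \<noteq> 0" using False by simp
      have qq: "q = (p1 / norm p, p2 / norm p)" by (simp add: q_def pp)
      have "F (norm p * (p1 / norm p), norm p * (p2 / norm p)) = norm p * F q"
        using hom[of "norm p" "p1 / norm p" "p2 / norm p"] qq by simp
      then show ?thesis using nz pp by simp
    qed
    ultimately have "norm p * F p0 \<le> F p" by (simp add: mult_left_mono)
    then have "norm p * F p0 \<le> 1" using Fp by simp
    then show ?thesis using m by (simp add: field_simps)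
  qed
  show ?thesis
  proof (rule that[of "1 / F p0"])
    show "1 / F p0 > 0" using m by simp
    fix a b assume "F (a, b) \<le> 1"
    then have "norm (a, b) \<le> 1 / F p0" by (rule bnd)
    moreover have "\<bar>a\<bar> \<le> norm (a, b)" "\<bar>b\<bar> \<le> norm (a, b)" by (rule abs_le_norm_pair)+
    ultimately show "\<bar>a\<bar> \<le> 1 / F p0 \<and> \<bar>b\<bar> \<le> 1 / F p0" by linarith
  qed
qed

lemma lbm_power: "lbm f \<Longrightarrow> lbm (\<lambda>t. f t ^ n)"
  by (induction n) (simp_all add: lbm_mult)

lemmas lbm_intros = lbm_const lbm_add lbm_diff lbm_mult lbm_uminus lbm_divide lbm_power





lemma AE_open_exists:
  assumes "AE t in lborel. P t" "open S" "S \<noteq> {}"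
  shows "\<exists>t\<in>S. P t"
proof (rule ccontr)
  assume "\<not> (\<exists>t\<in>S. P t)"
  obtain N where N: "{t \<in> space lborel. \<not> P t} \<subseteq> N" "N \<in> null_sets lborel"
    using assms(1) unfolding eventually_ae_filter by blast
  have "negligible N" using N(2) null_sets_completionI negligible_iff_null_sets by blast
  moreover have "S \<subseteq> N" using N(1) \<open>\<not> (\<exists>t\<in>S. P t)\<close> by auto
  ultimately have "negligible S" using negligible_subset by blast
  then show False using open_not_negligible assms(2,3) by blast
qed

lemma theta_lemma:
  fixes h1 h2 w u1 u2 \<theta> r :: "real \<Rightarrow> real"
  assumes l1: "llip h1" and l2: "llip h2"
    and cw: "continuous_on UNIV w"
    and der: "AE t in lborel. (h1 has_real_derivative (- w t * u2 t)) (at t) \<and>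
                 (h2 has_real_derivative (w t * u1 t)) (at t)"
    and hm: "AE t in lborel. h1 t * u1 t + h2 t * u2 t = 1"
    and nz: "\<And>t. h1 t ^ 2 + h2 t ^ 2 > 0"
    and c\<theta>: "continuous_on UNIV \<theta>"
    and rep: "\<And>t. h1 t = r (\<theta> t) * cos (\<theta> t)" "\<And>t. h2 t = r (\<theta> t) * sin (\<theta> t)"
  shows "(\<theta> has_real_derivative (w t0 / (h1 t0 ^ 2 + h2 t0 ^ 2))) (at t0)"
proof -
  define g where "g = (\<lambda>t. w t / (h1 t ^ 2 + h2 t ^ 2))"
  have ch1: "continuous_on UNIV h1" and ch2: "continuous_on UNIV h2" using llip_cont l1 l2 by blast+
  have cg: "continuous_on UNIV g" unfolding g_def using nz
    by (intro continuous_intros cw ch1 ch2) (metis less_irrefl)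
  have lg: "lbm g" by (rule lbm_cont[OF cg])
  define c where "c = cos (\<theta> t0)"
  define s where "s = sin (\<theta> t0)"
  define P where "P = (\<lambda>t. h2 t * c - h1 t * s)"
  define Q where "Q = (\<lambda>t. h1 t * c + h2 t * s)"
  have cs: "c^2 + s^2 = 1" unfolding c_def s_def by simp
  have rnz: "r (\<theta> t) \<noteq> 0" for t using nz[of t] rep[of t] by auto
  have QP: "Q t = r (\<theta> t) * cos (\<theta> t - \<theta> t0)" "P t = r (\<theta> t) * sin (\<theta> t - \<theta> t0)" for t
    unfolding Q_def P_def rep c_def s_def cos_diff sin_diff by (simp_all add: algebra_simps)
  have "isCont \<theta> t0" using c\<theta> continuous_on_eq_continuous_at by blast
  then obtain d where d: "d > 0" "\<And>t. dist t t0 < d \<Longrightarrow> dist (\<theta> t) (\<theta> t0) < pi / 2"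
    unfolding continuous_at_eps_delta by (metis pi_gt_zero half_gt_zero)
  define a where "a = t0 - d / 2"
  define b where "b = t0 + d / 2"
  have ab: "a < t0" "t0 < b" using d(1) by (auto simp: a_def b_def)
  have clo: "\<bar>\<theta> t - \<theta> t0\<bar> < pi / 2" if "t \<in> {a..b}" for t
    using d(2)[of t] that d(1) by (auto simp: a_def b_def dist_real_def)
  have Qnz: "Q t \<noteq> 0" if "t \<in> {a..b}" for t
  proof -
    have "-(pi/2) < \<theta> t - \<theta> t0" "\<theta> t - \<theta> t0 < pi/2" using clo[OF that] by linarith+
    then have "cos (\<theta> t - \<theta> t0) > 0" by (rule cos_gt_zero_pi)
    then show ?thesis using QP(1)[of t] rnz[of t] by simp
  qed
  have cQ: "continuous_on UNIV Q" unfolding Q_def by (intro continuous_intros ch1 ch2)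
  obtain t1 where t1: "t1 \<in> {a..b}" "\<And>t. t \<in> {a..b} \<Longrightarrow> \<bar>Q t1\<bar> \<le> \<bar>Q t\<bar>"
    using continuous_attains_inf[of "{a..b}" "\<lambda>t. \<bar>Q t\<bar>"] ab
      continuous_on_subset[OF continuous_on_rabs[OF cQ], of "{a..b}"] by auto
  have Qc: "\<bar>Q t\<bar> \<ge> \<bar>Q t1\<bar>" "\<bar>Q t1\<bar> > 0" if "t \<in> {a..b}" for t
    using t1 Qnz that by auto
  have Kth: "arctan (P t / Q t) = \<theta> t - \<theta> t0" if "t \<in> {a..b}" for t
  proof -
    have "P t / Q t = tan (\<theta> t - \<theta> t0)"
      unfolding QP tan_def using rnz[of t] by simp
    moreover have "-(pi/2) < \<theta> t - \<theta> t0" "\<theta> t - \<theta> t0 < pi/2" using clo[OF that] by linarith+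
    ultimately show "arctan (P t / Q t) = \<theta> t - \<theta> t0" using arctan_tan by simp
  qed
  define K where "K = (\<lambda>t. arctan (P t / Q t))"
  have Keq: "K = (\<lambda>t. arctan (P t * (1 / Q t)))" unfolding K_def by simp
  have LK: "LIP a b K" unfolding Keq
  proof (rule LIP_compose[OF _ _ arctan_lip])
    show "LIP a b (\<lambda>t. P t * (1 / Q t))"
    proof (rule LIP_mult)
      show "LIP a b P" unfolding P_def using l1 l2 unfolding llip_def by (intro LIP_diff LIP_mult LIP_const) auto
      show "LIP a b (\<lambda>t. 1 / Q t)"
      proof (rule LIP_inverse[of a b Q "\<bar>Q t1\<bar>"])
        show "LIP a b Q" unfolding Q_def using l1 l2 unfolding llip_def by (intro LIP_add LIP_mult LIP_const) auto
        show "\<bar>Q t1\<bar> > 0" using Qc(2) t1(1) by blast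
        show "\<And>t. t \<in> {a..b} \<Longrightarrow> \<bar>Q t1\<bar> \<le> \<bar>Q t\<bar>" using Qc(1) by blast
      qed
    qed
  qed simp
  define H where "H = (\<lambda>t. K t - (II g t - II g t0))"
  have LH: "LIP a b H" unfolding H_def by (intro LIP_diff LK LIP_II lg LIP_const)
  have dK: "AE t in lborel. t \<in> {a<..<b} \<longrightarrow> (K has_real_derivative g t) (at t)"
    using der hm
  proof eventually_elim
    case (elim t)
    show ?case
    proof
      assume tab: "t \<in> {a<..<b}"
      then have qn: "Q t \<noteq> 0" using Qnz by auto
      have dP: "(P has_real_derivative (w t * u1 t * c + w t * u2 t * s)) (at t)"
        unfolding P_def using elim(1) by (auto intro!: derivative_eq_intros)
      have dQ: "(Q has_real_derivative (- w t * u2 t * c + w t * u1 t * s)) (at t)"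
        unfolding Q_def using elim(1) by (auto intro!: derivative_eq_intros)
      have PQ2': "P t ^ 2 + Q t ^ 2 = (h1 t ^ 2 + h2 t ^ 2) * (c^2 + s^2)"
        unfolding P_def Q_def by (simp add: power2_eq_square algebra_simps)
      have PQ2: "P t ^ 2 + Q t ^ 2 = h1 t ^ 2 + h2 t ^ 2" using PQ2' cs by simp
      have num': "(w t * u1 t * c + w t * u2 t * s) * Q t - P t * (- w t * u2 t * c + w t * u1 t * s)
          = w t * (h1 t * u1 t + h2 t * u2 t) * (c^2 + s^2)"
        unfolding P_def Q_def by (simp add: power2_eq_square algebra_simps)
      have num: "(w t * u1 t * c + w t * u2 t * s) * Q t - P t * (- w t * u2 t * c + w t * u1 t * s) = w t"
        using num' cs elim(2) by simp
      have dR: "((\<lambda>x. P x / Q x) has_real_derivative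
          ((w t * u1 t * c + w t * u2 t * s) * Q t - P t * (- w t * u2 t * c + w t * u1 t * s)) / (Q t * Q t)) (at t)"
        by (rule DERIV_divide[OF dP dQ qn])
      have dK0: "(K has_real_derivative inverse (1 + (P t / Q t)\<^sup>2) * (w t / (Q t * Q t))) (at t)"
        unfolding K_def using DERIV_chain2[OF DERIV_arctan dR] num by simp
      have "inverse (1 + (P t / Q t)\<^sup>2) * (w t / (Q t * Q t)) = w t / (P t ^ 2 + Q t ^ 2)"
        using qn by (simp add: field_simps power2_eq_square)
      then show "(K has_real_derivative g t) (at t)" using dK0 PQ2 by (simp add: g_def)
    qed
  qed
  have dH: "AE t in lborel. t \<in> {a<..<b} \<longrightarrow> (H has_real_derivative 0) (at t)"
    using dK lebesgue_diff[OF lg]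
  proof eventually_elim
    case (elim t)
    show ?case
    proof
      assume "t \<in> {a<..<b}"
      then have "(K has_real_derivative g t) (at t)" using elim(1) by blast
      from DERIV_diff[OF this DERIV_diff[OF elim(2) DERIV_const[of "II g t0"]]]
      show "(H has_real_derivative 0) (at t)" unfolding H_def by simp
    qed
  qed
  have Hc: "H t = H t0" if t: "t \<in> {a..b}" for t
  proof -
    have "H (min t t0) = H (max t t0)"
    proof (rule LIP_const_lemma[of "min t t0" "max t t0" H])
      show "LIP (min t t0) (max t t0) H" by (rule LIP_subset[OF LH]) (use t ab in auto)
      show "AE s in lborel. s \<in> {min t t0<..<max t t0} \<longrightarrow> (H has_real_derivative 0) (at s)"
        using dH by (rule eventually_mono) (use t ab in auto)
    qed simp
    then show ?thesis by (cases "t \<le> t0") (auto simp: min_def max_def)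
  qed
  have Ht0: "H t0 = 0" unfolding H_def K_def using Kth[of t0] ab by simp
  have eqth: "\<theta> t = \<theta> t0 + (LBINT s=ereal t0..ereal t. g s)" if t: "t \<in> {a..b}" for t
  proof -
    have "K t = II g t - II g t0" using Hc[OF t] Ht0 unfolding H_def by simp
    moreover have "K t = \<theta> t - \<theta> t0" using Kth[OF t] unfolding K_def by simp
    ultimately show ?thesis using II_diff[OF lg, of t t0] by simp
  qed
  have "((\<lambda>u. LBINT s=t0..u. g s) has_vector_derivative g t0) (at t0 within {a..b})"
    by (rule interval_integral_FTC2) (use ab continuous_on_subset[OF cg] in auto)
  then have "((\<lambda>u. LBINT s=t0..u. g s) has_real_derivative g t0) (at t0)"
    using at_within_Icc_at[OF ab] by (simp add: has_real_derivative_iff_has_vector_derivative)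
  then have "((\<lambda>u. \<theta> t0 + (LBINT s=t0..u. g s)) has_real_derivative g t0) (at t0)"
    by (auto intro!: derivative_eq_intros)
  then have "(\<theta> has_real_derivative g t0) (at t0)"
  proof (rule has_field_derivative_transform_within_open[of _ _ _ "{a<..<b}"])
    show "open {a<..<b}" by simp
    show "t0 \<in> {a<..<b}" using ab by simp
    fix x assume "x \<in> {a<..<b}"
    then have "x \<in> {a..b}" by simp
    from eqth[OF this] show "\<theta> t0 + (LBINT s=ereal t0..ereal x. g s) = \<theta> x" by simp
  qed
  then show ?thesis by (simp add: g_def)
qed

theorem mainTheorem2:
  fixes F :: "real \<times> real \<Rightarrow> real"
    and x y z v u1 u2 \<psi>1 \<psi>2 \<psi>3 \<psi>4 :: "real \<Rightarrow> real"
    and \<phi>1 \<phi>2 \<phi>3 \<phi>4 :: real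
  assumes hF: "is_norm2 F"
    and hext: "normal_extremal F x y z v u1 u2 \<psi>1 \<psi>2 \<psi>3 \<psi>4"
    and h\<phi>: "\<phi>1 = \<psi>1 0" "\<phi>2 = \<psi>2 0" "\<phi>3 = \<psi>3 0" "\<phi>4 = \<psi>4 0"
  defines "h1 \<equiv> (\<lambda>t. ham1 (\<psi>1 t) (\<psi>3 t) (\<psi>4 t) (x t) (y t) (z t))"
    and "h2 \<equiv> (\<lambda>t. ham2 (\<psi>2 t) (\<psi>3 t) (\<psi>4 t) (x t))"
  shows
   "(\<forall>t. \<psi>4 t = \<phi>4 \<and>
         \<psi>3 t = \<phi>3 + \<phi>4 * x t / 2 \<and>
         \<psi>2 t = \<phi>2 + \<phi>3 * x t / 2 + \<phi>4 * (x t)^2 / 6 \<and>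
         \<psi>1 t = \<phi>1 - \<phi>3 * y t / 2 - \<phi>4 * (x t * y t + 3 * z t) / 6 \<and>
         h1 t = \<phi>1 - (\<phi>3 + \<phi>4 * x t / 2) * y t - \<phi>4 * z t \<and>
         h2 t = \<phi>2 + (\<phi>3 + \<phi>4 * x t / 2) * x t)
    \<and> (AE t in lborel.
         (h1 has_real_derivative (- (\<phi>3 + \<phi>4 * x t) * u2 t)) (at t) \<and>
         (h2 has_real_derivative ((\<phi>3 + \<phi>4 * x t) * u1 t)) (at t))
    \<and> (\<forall>t. (\<phi>3 + \<phi>4 * x t)^2 / 2 - \<phi>4 * h2 t = \<phi>3^2 / 2 - \<phi>2 * \<phi>4)
    \<and> (\<forall>t. \<phi>1 * x t + \<phi>2 * y t + (2 * \<phi>3 + \<phi>4 * x t / 2) * z t + 3 * \<phi>4 * v t = t)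
    \<and> (\<forall>\<theta> :: real \<Rightarrow> real.
         continuous_on UNIV \<theta> \<and>
         (\<forall>t. (h1 t, h2 t) = (polar_r F (\<theta> t) * cos (\<theta> t), polar_r F (\<theta> t) * sin (\<theta> t)))
         \<longrightarrow>
         (\<forall>t. \<theta> differentiable (at t)) \<and> continuous_on UNIV (deriv \<theta>) \<and>
         (\<forall>t. \<phi>3 + \<phi>4 * x t = (polar_r F (\<theta> t))^2 * deriv \<theta> t) \<and>
         (\<forall>t. (deriv \<theta> t)^2 =
                (\<phi>3^2 + 2 * \<phi>4 * (polar_r F (\<theta> t) * sin (\<theta> t) - \<phi>2)) / (polar_r F (\<theta> t))^4))"
proof -
  define gz where "gz = (\<lambda>s. (x s * u2 s - y s * u1 s) / 2)"
  define gv where "gv = (\<lambda>s. - (z s + x s * y s / 6) * u1 s / 2 + x s ^ 2 * u2 s / 12)"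
  note E = hext[unfolded normal_extremal_def]
  have m1: "u1 \<in> borel_measurable lborel" and m2: "u2 \<in> borel_measurable lborel"
    and ub: "\<And>t. (u1 t, u2 t) \<in> ballU F" using E by blast+
  have ex: "x = II u1" using E unfolding II_def by (intro ext) blast
  have ey: "y = II u2" using E unfolding II_def by (intro ext) blast
  have ez: "z = II gz" using E unfolding II_def gz_def by (intro ext) blast
  have ev: "v = II gv" using E unfolding II_def gv_def by (intro ext) blast
  have a1: "\<forall>t. \<psi>1 t = \<psi>1 0 + (LBINT s=0..ereal t.
            \<psi>4 s * y s * u1 s / 12 - (\<psi>3 s / 2 + \<psi>4 s * x s / 6) * u2 s)" using E by blast
  have p1: "\<And>t. \<psi>1 t = \<phi>1 + II (\<lambda>s. \<psi>4 s * y s * u1 s / 12 - (\<psi>3 s / 2 + \<psi>4 s * x s / 6) * u2 s) t"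
    unfolding II_def h\<phi> by (rule a1[rule_format])
  have a2: "\<forall>t. \<psi>2 t = \<psi>2 0 + (LBINT s=0..ereal t. (\<psi>3 s / 2 + \<psi>4 s * x s / 12) * u1 s)" using E by blast
  have p2: "\<And>t. \<psi>2 t = \<phi>2 + II (\<lambda>s. (\<psi>3 s / 2 + \<psi>4 s * x s / 12) * u1 s) t"
    unfolding II_def h\<phi> by (rule a2[rule_format])
  have a3: "\<forall>t. \<psi>3 t = \<psi>3 0 + (LBINT s=0..ereal t. \<psi>4 s * u1 s / 2)" using E by blast
  have p3: "\<And>t. \<psi>3 t = \<phi>3 + II (\<lambda>s. \<psi>4 s * u1 s / 2) t"
    unfolding II_def h\<phi> by (rule a3[rule_format])
  have a4: "\<forall>t. \<psi>4 t = \<psi>4 0" using E by blast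
  have p4: "\<And>t. \<psi>4 t = \<phi>4" unfolding h\<phi> by (rule a4[rule_format])
  have "AE t in lborel.
        ham1 (\<psi>1 t) (\<psi>3 t) (\<psi>4 t) (x t) (y t) (z t) * u1 t
          + ham2 (\<psi>2 t) (\<psi>3 t) (\<psi>4 t) (x t) * u2 t
        = F_U F (ham1 (\<psi>1 t) (\<psi>3 t) (\<psi>4 t) (x t) (y t) (z t), ham2 (\<psi>2 t) (\<psi>3 t) (\<psi>4 t) (x t))
      \<and> F_U F (ham1 (\<psi>1 t) (\<psi>3 t) (\<psi>4 t) (x t) (y t) (z t), ham2 (\<psi>2 t) (\<psi>3 t) (\<psi>4 t) (x t)) = 1"
    using E by blast
  then have hmax: "AE t in lborel. h1 t * u1 t + h2 t * u2 t = 1"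
    by (rule eventually_mono) (simp add: h1_def h2_def)
  obtain K where K: "K > 0" "\<And>a b. F (a, b) \<le> 1 \<Longrightarrow> \<bar>a\<bar> \<le> K \<and> \<bar>b\<bar> \<le> K"
    using norm2_bound[OF hF] by blast
  have uK: "\<bar>u1 t\<bar> \<le> K" "\<bar>u2 t\<bar> \<le> K" for t using K(2) ub[of t] unfolding ballU_def by auto
  have lu1: "lbm u1" using m1 uK unfolding lbm_def by blast
  have lu2: "lbm u2" using m2 uK unfolding lbm_def by blast
  have llx: "llip x" unfolding ex by (rule llip_II[OF lu1])
  have lly: "llip y" unfolding ey by (rule llip_II[OF lu2])
  have lx: "lbm x" by (rule lbm_cont[OF llip_cont[OF llx]])
  have ly: "lbm y" by (rule lbm_cont[OF llip_cont[OF lly]])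
  have lgz: "lbm gz" unfolding gz_def by (intro lbm_intros lx ly lu1 lu2)
  have llz: "llip z" unfolding ez by (rule llip_II[OF lgz])
  have lz: "lbm z" by (rule lbm_cont[OF llip_cont[OF llz]])
  have lgv: "lbm gv" unfolding gv_def by (intro lbm_intros lx ly lz lu1 lu2)
  have llv: "llip v" unfolding ev by (rule llip_II[OF lgv])
  have dx: "AE t in lborel. (x has_real_derivative u1 t) (at t)" unfolding ex by (rule lebesgue_diff[OF lu1])
  have dy: "AE t in lborel. (y has_real_derivative u2 t) (at t)" unfolding ey by (rule lebesgue_diff[OF lu2])
  have dz: "AE t in lborel. (z has_real_derivative gz t) (at t)" unfolding ez by (rule lebesgue_diff[OF lgz])
  have dv: "AE t in lborel. (v has_real_derivative gv t) (at t)" unfolding ev by (rule lebesgue_diff[OF lgv])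
  have x0: "x 0 = 0" "y 0 = 0" "z 0 = 0" "v 0 = 0" by (simp_all add: ex ey ez ev)
  have e4: "\<psi>4 = (\<lambda>_. \<phi>4)" using p4 by auto
  have "(\<lambda>t. \<phi>4 * x t / 2) t = (\<lambda>t. \<phi>4 * x t / 2) 0 + II (\<lambda>s. \<psi>4 s * u1 s / 2) t" for t
  proof (rule ftc_II)
    show "llip (\<lambda>t. \<phi>4 * x t / 2)" by (intro llip_intros llx)
    show "lbm (\<lambda>s. \<psi>4 s * u1 s / 2)" unfolding e4 by (intro lbm_intros lu1)
    show "AE t in lborel. ((\<lambda>t. \<phi>4 * x t / 2) has_real_derivative \<psi>4 t * u1 t / 2) (at t)"
      using dx
    proof eventually_elim
      case (elim t)
      show ?case by (auto intro!: derivative_eq_intros elim simp: e4)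
    qed
  qed
  then have e3': "\<psi>3 t = \<phi>3 + \<phi>4 * x t / 2" for t using p3[of t] x0 by simp
  then have e3: "\<psi>3 = (\<lambda>t. \<phi>3 + \<phi>4 * x t / 2)" by auto
  have "(\<lambda>t. \<phi>3 * x t / 2 + \<phi>4 * (x t)^2 / 6) t = (\<lambda>t. \<phi>3 * x t / 2 + \<phi>4 * (x t)^2 / 6) 0
          + II (\<lambda>s. (\<psi>3 s / 2 + \<psi>4 s * x s / 12) * u1 s) t" for t
  proof (rule ftc_II)
    show "llip (\<lambda>t. \<phi>3 * x t / 2 + \<phi>4 * (x t)^2 / 6)" unfolding power2_eq_square by (intro llip_intros llx)
    show "lbm (\<lambda>s. (\<psi>3 s / 2 + \<psi>4 s * x s / 12) * u1 s)" unfolding e4 e3 by (intro lbm_intros lu1 lx)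
    show "AE t in lborel. ((\<lambda>t. \<phi>3 * x t / 2 + \<phi>4 * (x t)^2 / 6) has_real_derivative
              (\<psi>3 t / 2 + \<psi>4 t * x t / 12) * u1 t) (at t)"
      using dx
    proof eventually_elim
      case (elim t)
      show ?case by (auto intro!: derivative_eq_intros elim simp: e4 e3 field_simps)
    qed
  qed
  then have e2': "\<psi>2 t = \<phi>2 + \<phi>3 * x t / 2 + \<phi>4 * (x t)^2 / 6" for t using p2[of t] x0 by simp
  have "(\<lambda>t. - \<phi>3 * y t / 2 - \<phi>4 * (x t * y t + 3 * z t) / 6) t
         = (\<lambda>t. - \<phi>3 * y t / 2 - \<phi>4 * (x t * y t + 3 * z t) / 6) 0
          + II (\<lambda>s. \<psi>4 s * y s * u1 s / 12 - (\<psi>3 s / 2 + \<psi>4 s * x s / 6) * u2 s) t" for t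
  proof (rule ftc_II)
    show "llip (\<lambda>t. - \<phi>3 * y t / 2 - \<phi>4 * (x t * y t + 3 * z t) / 6)" by (intro llip_intros llx lly llz)
    show "lbm (\<lambda>s. \<psi>4 s * y s * u1 s / 12 - (\<psi>3 s / 2 + \<psi>4 s * x s / 6) * u2 s)"
      unfolding e4 e3 by (intro lbm_intros lu1 lu2 lx ly)
    show "AE t in lborel. ((\<lambda>t. - \<phi>3 * y t / 2 - \<phi>4 * (x t * y t + 3 * z t) / 6) has_real_derivative
              \<psi>4 t * y t * u1 t / 12 - (\<psi>3 t / 2 + \<psi>4 t * x t / 6) * u2 t) (at t)"
      using dx dy dz
    proof eventually_elim
      case (elim t)
      show ?case by (auto intro!: derivative_eq_intros elim simp: e4 e3 gz_def field_simps)
    qed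
  qed
  then have e1': "\<psi>1 t = \<phi>1 - \<phi>3 * y t / 2 - \<phi>4 * (x t * y t + 3 * z t) / 6" for t using p1[of t] x0 by simp
  have eh1': "h1 t = \<phi>1 - (\<phi>3 + \<phi>4 * x t / 2) * y t - \<phi>4 * z t" for t
    unfolding h1_def ham1_def e1' e3' p4 by (simp add: field_simps)
  have eh2': "h2 t = \<phi>2 + (\<phi>3 + \<phi>4 * x t / 2) * x t" for t
    unfolding h2_def ham2_def e2' e3' p4 by (simp add: field_simps power2_eq_square)
  have eh1: "h1 = (\<lambda>t. \<phi>1 - (\<phi>3 + \<phi>4 * x t / 2) * y t - \<phi>4 * z t)" using eh1' by auto
  have eh2: "h2 = (\<lambda>t. \<phi>2 + (\<phi>3 + \<phi>4 * x t / 2) * x t)" using eh2' by auto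
  have part1: "\<forall>t. \<psi>4 t = \<phi>4 \<and>
         \<psi>3 t = \<phi>3 + \<phi>4 * x t / 2 \<and>
         \<psi>2 t = \<phi>2 + \<phi>3 * x t / 2 + \<phi>4 * (x t)^2 / 6 \<and>
         \<psi>1 t = \<phi>1 - \<phi>3 * y t / 2 - \<phi>4 * (x t * y t + 3 * z t) / 6 \<and>
         h1 t = \<phi>1 - (\<phi>3 + \<phi>4 * x t / 2) * y t - \<phi>4 * z t \<and>
         h2 t = \<phi>2 + (\<phi>3 + \<phi>4 * x t / 2) * x t"
    using p4 e3' e2' e1' eh1' eh2' by blast
  have part2: "AE t in lborel.
         (h1 has_real_derivative (- (\<phi>3 + \<phi>4 * x t) * u2 t)) (at t) \<and>
         (h2 has_real_derivative ((\<phi>3 + \<phi>4 * x t) * u1 t)) (at t)"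
    using dx dy dz
  proof eventually_elim
    case (elim t)
    show ?case unfolding eh1 eh2
      by (auto intro!: derivative_eq_intros elim simp: gz_def field_simps)
  qed
  have part3: "\<forall>t. (\<phi>3 + \<phi>4 * x t)^2 / 2 - \<phi>4 * h2 t = \<phi>3^2 / 2 - \<phi>2 * \<phi>4"
    unfolding eh2 by (simp add: field_simps power2_eq_square)
  let ?G = "\<lambda>t. \<phi>1 * x t + \<phi>2 * y t + (2 * \<phi>3 + \<phi>4 * x t / 2) * z t + 3 * \<phi>4 * v t - t"
  have "?G t = ?G 0" for t
  proof (rule llip_const_lemma)
    show "llip ?G" by (intro llip_intros llx lly llz llv)
    show "AE t in lborel. (?G has_real_derivative 0) (at t)"
      using dx dy dz dv hmax
    proof eventually_elim
      case (elim t)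
      have "(?G has_real_derivative (h1 t * u1 t + h2 t * u2 t - 1)) (at t)"
        unfolding eh1 eh2
        by (auto intro!: derivative_eq_intros elim(1-4) simp: gz_def gv_def field_simps power2_eq_square)
      then show ?case using elim(5) by simp
    qed
  qed
  then have part4: "\<forall>t. \<phi>1 * x t + \<phi>2 * y t + (2 * \<phi>3 + \<phi>4 * x t / 2) * z t + 3 * \<phi>4 * v t = t"
    using x0 by simp
  have lh1: "llip h1" unfolding eh1 by (intro llip_intros llx lly llz)
  have lh2: "llip h2" unfolding eh2 by (intro llip_intros llx)
  have ch1: "continuous_on UNIV h1" and ch2: "continuous_on UNIV h2" using llip_cont lh1 lh2 by blast+
  have cw: "continuous_on UNIV (\<lambda>t. \<phi>3 + \<phi>4 * x t)"
    by (intro continuous_intros llip_cont[OF llx])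
  have hK: "AE t in lborel. \<bar>h1 t\<bar> + \<bar>h2 t\<bar> \<ge> 1 / K"
    using hmax
  proof (rule eventually_mono)
    fix t assume h: "h1 t * u1 t + h2 t * u2 t = 1"
    have "1 \<le> \<bar>h1 t\<bar> * \<bar>u1 t\<bar> + \<bar>h2 t\<bar> * \<bar>u2 t\<bar>"
      using h abs_triangle_ineq[of "h1 t * u1 t" "h2 t * u2 t"] by (simp add: abs_mult)
    also have "\<dots> \<le> \<bar>h1 t\<bar> * K + \<bar>h2 t\<bar> * K"
      using uK[of t] by (intro add_mono mult_left_mono) auto
    finally have "1 \<le> (\<bar>h1 t\<bar> + \<bar>h2 t\<bar>) * K" by (simp add: algebra_simps)
    then show "\<bar>h1 t\<bar> + \<bar>h2 t\<bar> \<ge> 1 / K" using K(1) by (simp add: field_simps)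
  qed
  have nz: "h1 t ^ 2 + h2 t ^ 2 > 0" for t
  proof (rule ccontr)
    assume "\<not> h1 t ^ 2 + h2 t ^ 2 > 0"
    then have z: "h1 t = 0" "h2 t = 0"
      using sum_power2_gt_zero_iff[of "h1 t" "h2 t"] by auto
    let ?S = "{s. \<bar>h1 s\<bar> + \<bar>h2 s\<bar> < 1 / K}"
    have "open ?S"
      by (intro open_Collect_less continuous_intros ch1 ch2 continuous_on_const)
    moreover have "t \<in> ?S" using z K(1) by simp
    ultimately obtain s where "s \<in> ?S" "\<bar>h1 s\<bar> + \<bar>h2 s\<bar> \<ge> 1 / K"
      using AE_open_exists[OF hK, of ?S] by blast
    then show False by simp
  qed
  have part5: "\<forall>\<theta> :: real \<Rightarrow> real.
         continuous_on UNIV \<theta> \<and>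
         (\<forall>t. (h1 t, h2 t) = (polar_r F (\<theta> t) * cos (\<theta> t), polar_r F (\<theta> t) * sin (\<theta> t)))
         \<longrightarrow>
         (\<forall>t. \<theta> differentiable (at t)) \<and> continuous_on UNIV (deriv \<theta>) \<and>
         (\<forall>t. \<phi>3 + \<phi>4 * x t = (polar_r F (\<theta> t))^2 * deriv \<theta> t) \<and>
         (\<forall>t. (deriv \<theta> t)^2 =
                (\<phi>3^2 + 2 * \<phi>4 * (polar_r F (\<theta> t) * sin (\<theta> t) - \<phi>2)) / (polar_r F (\<theta> t))^4)"
  proof (intro allI impI)
    fix \<theta> :: "real \<Rightarrow> real"
    assume A: "continuous_on UNIV \<theta> \<and>
         (\<forall>t. (h1 t, h2 t) = (polar_r F (\<theta> t) * cos (\<theta> t), polar_r F (\<theta> t) * sin (\<theta> t)))"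
    let ?r = "polar_r F"
    have c\<theta>: "continuous_on UNIV \<theta>" using A by blast
    have rep1: "h1 t = ?r (\<theta> t) * cos (\<theta> t)" and rep2: "h2 t = ?r (\<theta> t) * sin (\<theta> t)" for t
      using A by auto
    have d\<theta>: "(\<theta> has_real_derivative ((\<phi>3 + \<phi>4 * x t) / (h1 t ^ 2 + h2 t ^ 2))) (at t)" for t
      by (rule theta_lemma[where w = "\<lambda>t. \<phi>3 + \<phi>4 * x t", OF lh1 lh2 cw part2 hmax nz c\<theta> rep1 rep2])
    have r2: "h1 t ^ 2 + h2 t ^ 2 = (?r (\<theta> t))^2" for t
      unfolding rep1 rep2 power_mult_distrib by (metis distrib_left mult.right_neutral sin_cos_squared_add2)
    have dd: "deriv \<theta> t = (\<phi>3 + \<phi>4 * x t) / (h1 t ^ 2 + h2 t ^ 2)" for t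
      by (rule DERIV_imp_deriv[OF d\<theta>])
    have "\<theta> differentiable (at t)" for t
      using d\<theta>[of t] real_differentiable_def by blast
    moreover have "continuous_on UNIV (deriv \<theta>)"
    proof -
      have "continuous_on UNIV (\<lambda>t. (\<phi>3 + \<phi>4 * x t) / (h1 t ^ 2 + h2 t ^ 2))"
        using nz by (intro continuous_intros cw ch1 ch2 llip_cont[OF llx]) (metis less_irrefl)
      moreover have "deriv \<theta> = (\<lambda>t. (\<phi>3 + \<phi>4 * x t) / (h1 t ^ 2 + h2 t ^ 2))" using dd by auto
      ultimately show ?thesis by simp
    qed
    moreover have "\<phi>3 + \<phi>4 * x t = (?r (\<theta> t))^2 * deriv \<theta> t" for t
      using nz[of t] unfolding dd r2 by simp
    moreover have "(deriv \<theta> t)^2 =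
                (\<phi>3^2 + 2 * \<phi>4 * (?r (\<theta> t) * sin (\<theta> t) - \<phi>2)) / (?r (\<theta> t))^4" for t
    proof -
      have w2: "(\<phi>3 + \<phi>4 * x t)^2 = \<phi>3^2 + 2 * \<phi>4 * (h2 t - \<phi>2)"
        using part3[rule_format, of t] by (simp add: algebra_simps)
      have "(deriv \<theta> t)^2 = (\<phi>3 + \<phi>4 * x t)^2 / ((?r (\<theta> t))^2)^2"
        unfolding dd r2 by (simp add: power_divide)
      also have "((?r (\<theta> t))^2)^2 = (?r (\<theta> t))^4" by simp
      finally show ?thesis unfolding w2 rep2 .
    qed
    ultimately show "(\<forall>t. \<theta> differentiable (at t)) \<and> continuous_on UNIV (deriv \<theta>) \<and>
         (\<forall>t. \<phi>3 + \<phi>4 * x t = (?r (\<theta> t))^2 * deriv \<theta> t) \<and>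
         (\<forall>t. (deriv \<theta> t)^2 =
                (\<phi>3^2 + 2 * \<phi>4 * (?r (\<theta> t) * sin (\<theta> t) - \<phi>2)) / (?r (\<theta> t))^4)" by blast
  qed
  show ?thesis using part1 part2 part3 part4 part5 by blast
qed


end
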